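(* Let $T>0$, let $U\subseteq\mathbb{R}^k$ with $0\in U$, let $f:[0,T]\times\mathbb{R}^n\times U\to\mathbb{R}^n$ be continuous and continuously differentiable in its second and third arguments, and let $x_0\in\mathbb{R}^n$. Let $\|\cdot\|$ be a norm on $\mathbb{R}^n$ with dual norm $\|\cdot\|_\star$, and $\|\cdot\|_U$ a norm on $\mathbb{R}^k$. Assume: (A1) there is $c>0$ such that for all $t\in[0,T]$ and $\tilde u\in U$, the map $x\mapsto f(t,x,\tilde u)$ has one-sided Lipschitz constant at most $-c$ with respect to $\|\cdot\|$, and the solution of $\dot x=f(t,x,0)$, $x(0)=x_0$ is bounded on $[0,T]$; (A2) for all $t\in[0,T]$ and $\tilde x\in\mathbb{R}^n$, the map $u\mapsto f(t,\tilde x,u)$ is Lipschitz from $(U,\|\cdot\|_U)$ to $(\mathbb{R}^n,\|\cdot\|)$ with constant $\ell_{f,u}$. Consider the system $\dot x(t)=f(t,x(t),u(t))$ and its adjoint $\dot\lambda(t)=-D_xf(t,x(t),u(t))^\top\lambda(t)-v(t)$ on $[0,T]$, with measurable inputs $u:[0,T]\to U$ and $v:[0,T]\to V$, where $U$ is bounded in $\|\cdot\|_U$ and $V\subset\mathbb{R}^n$ is bounded in $\|\cdot\|_\star$. Suppose the boundary conditions $x(0)$ and $\lambda(T)$ range over bounded sets. Then there exist sets $X\subset\mathbb{R}^n$ bounded in $\|\cdot\|$ and $\Lambda\subset\mathbb{R}^n$ bounded in $\|\cdot\|_\star$ such that $x(t)\in X$ and $\lambda(t)\in\Lambda$ for all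 $t\in[0,T]$, for all such boundary conditions, and for all measurable inputs $u:[0,T]\to U$ and $v:[0,T]\to V$.
   Context: The dual norm is $\|z\|_\star=\sup_{\|y\|\le1}y^\top z$. For a matrix $A$, the induced norm is $\|A\|=\sup_{\|x\|=1}\|Ax\|$ and the logarithmic norm is $\mu(A)=\lim_{h\to0^+}(\|I_n+hA\|-1)/h$. For continuously differentiable $F:\mathbb{R}^n\to\mathbb{R}^n$, its one-sided Lipschitz constant with respect to $\|\cdot\|$ is $\sup_{x}\mu(DF(x))$. Solutions are assumed to exist on $[0,T]$. *)

theory Defs
  imports "HOL-Analysis.Analysis"
begin

definition is_norm :: "('a::real_vector \<Rightarrow> real) \<Rightarrow> bool" where
  "is_norm N \<longleftrightarrow> (\<forall>x y. N (x + y) \<le> N x + N y) \<and> (\<forall>a x. N (a *\<^sub>R x) = \<bar>a\<bar> * N x)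
     \<and> (\<forall>x. N x = 0 \<longleftrightarrow> x = 0)"

definition dual_norm :: "(real^'n \<Rightarrow> real) \<Rightarrow> real^'n \<Rightarrow> real" where
  "dual_norm N z = (SUP y\<in>{y. N y \<le> 1}. y \<bullet> z)"

definition ind_norm :: "(real^'n \<Rightarrow> real) \<Rightarrow> real^'n^'n \<Rightarrow> real" where
  "ind_norm N A = (SUP x\<in>{x. N x = 1}. N (A *v x))"

definition log_norm :: "(real^'n \<Rightarrow> real) \<Rightarrow> real^'n^'n \<Rightarrow> real" where
  "log_norm N A = Lim (at_right 0) (\<lambda>h. (ind_norm N (mat 1 + h *\<^sub>R A) - 1) / h)"

definition bounded_wrt :: "('a \<Rightarrow> real) \<Rightarrow> 'a set \<Rightarrow> bool" where
  "bounded_wrt N S \<longleftrightarrow> (\<exists>B. \<forall>x\<in>S. N x \<le> B)"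

definition carath_sol :: "real \<Rightarrow> (real \<Rightarrow> 'a::euclidean_space \<Rightarrow> 'a) \<Rightarrow> (real \<Rightarrow> 'a) \<Rightarrow> bool" where
  "carath_sol T g y \<longleftrightarrow> (\<lambda>s. g s (y s)) absolutely_integrable_on {0..T}
     \<and> (\<forall>t\<in>{0..T}. ((\<lambda>s. g s (y s)) has_integral (y t - y 0)) {0..t})"

end

theory Submission
  imports Defs
begin


section \<open>Norm basics\<close>

lemma nrm_scale: "is_norm N \<Longrightarrow> N (a *\<^sub>R x) = \<bar>a\<bar> * N x"
  unfolding is_norm_def by blast
lemma nrm_tri: "is_norm N \<Longrightarrow> N (x + y) \<le> N x + N y"
  unfolding is_norm_def by blast
lemma nrm_0: "is_norm N \<Longrightarrow> N 0 = 0"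
  using nrm_scale[of N 0 0] by simp
lemma nrm_neg: "is_norm N \<Longrightarrow> N (- x) = N x"
  using nrm_scale[of N "-1" x] by simp
lemma nrm_nonneg: "is_norm N \<Longrightarrow> N x \<ge> 0"
  using nrm_tri[of N x "-x"] nrm_neg[of N x] nrm_0[of N] by simp
lemma nrm_eq0: "is_norm N \<Longrightarrow> N x = 0 \<longleftrightarrow> x = 0"
  unfolding is_norm_def by blast
lemma nrm_diff: "is_norm N \<Longrightarrow> N (x - y) \<le> N x + N y"
  using nrm_tri[of N x "-y"] nrm_neg[of N y] by simp
lemma nrm_rev: "is_norm N \<Longrightarrow> N x - N y \<le> N (x - y)"
  using nrm_tri[of N "x - y" y] by simp

lemma nrm_sum: assumes "is_norm N" "finite S" shows "N (sum f S) \<le> (\<Sum>i\<in>S. N (f i))"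
  using assms(2)
proof (induction S rule: finite_induct)
  case empty then show ?case by (simp add: nrm_0[OF assms(1)])
next
  case (insert x F)
  then show ?case using nrm_tri[OF assms(1), of "f x" "sum f F"] by simp
qed

lemma nrm_upper:
  fixes N :: "'a::euclidean_space \<Rightarrow> real"
  assumes "is_norm N"
  shows "\<exists>B>0. \<forall>x. N x \<le> B * norm x"
proof -
  define B where "B = (\<Sum>b\<in>Basis. N b) + 1"
  have B0: "B > 0" unfolding B_def using nrm_nonneg[OF assms] by (simp add: sum_nonneg add_nonneg_pos)
  have "N x \<le> B * norm x" for x
  proof -
    have "N x = N (\<Sum>b\<in>Basis. (x \<bullet> b) *\<^sub>R b)" by (simp add: euclidean_representation)
    also have "\<dots> \<le> (\<Sum>b\<in>Basis. N ((x \<bullet> b) *\<^sub>R b))" by (rule nrm_sum[OF assms]) simp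
    also have "\<dots> = (\<Sum>b\<in>Basis. \<bar>x \<bullet> b\<bar> * N b)" by (simp add: nrm_scale[OF assms])
    also have "\<dots> \<le> (\<Sum>b\<in>Basis. norm x * N b)"
      by (rule sum_mono) (simp add: Basis_le_norm mult_right_mono nrm_nonneg[OF assms])
    also have "\<dots> \<le> B * norm x" unfolding B_def
      by (simp add: sum_distrib_left[symmetric] sum_distrib_right[symmetric] algebra_simps)
    finally show ?thesis .
  qed
  with B0 show ?thesis by blast
qed

lemma nrm_cont:
  fixes N :: "'a::euclidean_space \<Rightarrow> real"
  assumes "is_norm N"
  shows "continuous_on S N"
proof -
  obtain B where B: "B > 0" "\<And>x. N x \<le> B * norm x" using nrm_upper[OF assms] by blast
  have "\<bar>N x - N y\<bar> \<le> B * dist x y" for x y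
    using nrm_rev[OF assms, of x y] nrm_rev[OF assms, of y x] B(2)[of "x - y"] B(2)[of "y - x"]
    by (simp add: dist_norm norm_minus_commute)
  then show ?thesis
    unfolding continuous_on_iff dist_real_def
    by (metis B(1) le_less_trans mult.commute pos_less_divide_eq zero_less_divide_iff)
qed

lemma nrm_lower:
  fixes N :: "'a::euclidean_space \<Rightarrow> real"
  assumes "is_norm N"
  shows "\<exists>a>0. \<forall>x. a * norm x \<le> N x"
proof -
  obtain b :: 'a where b: "b \<in> Basis" using nonempty_Basis by blast
  then have "sphere 0 1 \<noteq> ({}::'a set)" by (metis mem_sphere_0 norm_Basis empty_iff)
  then obtain z where z: "z \<in> sphere (0::'a) 1" "\<And>y. y \<in> sphere 0 1 \<Longrightarrow> N z \<le> N y"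
    using continuous_attains_inf[OF compact_sphere _ nrm_cont[OF assms]] by blast
  have z0: "N z > 0" using z(1) nrm_eq0[OF assms, of z] nrm_nonneg[OF assms, of z] by force
  have "N z * norm x \<le> N x" for x
  proof (cases "x = 0")
    case True then show ?thesis by (simp add: nrm_0[OF assms])
  next
    case False
    have "N z \<le> N ((1 / norm x) *\<^sub>R x)" using z(2) False by simp
    also have "\<dots> = N x / norm x" using nrm_scale[OF assms] by simp
    finally show ?thesis using False by (simp add: field_simps)
  qed
  with z0 show ?thesis by blast
qed

section \<open>Dual norm\<close>

lemma dn_bdd:
  fixes N :: "real^'n \<Rightarrow> real"
  assumes "is_norm N"
  shows "bdd_above ((\<lambda>y. y \<bullet> z) ` {y. N y \<le> 1})"
proof -
  obtain a where a: "a > 0" "\<And>x. a * norm x \<le> N x" using nrm_lower[OF assms] by blast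
  have "y \<bullet> z \<le> norm z / a" if "N y \<le> 1" for y
  proof -
    have "norm y \<le> 1 / a" using a(2)[of y] that a(1) by (simp add: field_simps)
    then have "y \<bullet> z \<le> (1/a) * norm z"
      by (meson Cauchy_Schwarz_ineq2 abs_le_D1 mult_right_mono norm_ge_zero order_trans)
    then show ?thesis by simp
  qed
  then show ?thesis by (intro bdd_aboveI2[where M="norm z / a"]) auto
qed

lemma dn_ge: "is_norm N \<Longrightarrow> N y \<le> 1 \<Longrightarrow> y \<bullet> z \<le> dual_norm N z"
  unfolding dual_norm_def by (rule cSUP_upper[OF _ dn_bdd]) auto

lemma dn_le: "is_norm N \<Longrightarrow> (\<And>y. N y \<le> 1 \<Longrightarrow> y \<bullet> z \<le> M) \<Longrightarrow> dual_norm N z \<le> M"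
proof -
  assume a: "is_norm N" and b: "\<And>y. N y \<le> 1 \<Longrightarrow> y \<bullet> z \<le> M"
  have "{y. N y \<le> 1} \<noteq> {}" using nrm_0[OF a] by (metis empty_iff mem_Collect_eq zero_le_one)
  then show ?thesis unfolding dual_norm_def by (rule cSUP_least) (use b in auto)
qed

lemma dn_nonneg: "is_norm N \<Longrightarrow> dual_norm N z \<ge> 0"
  using dn_ge[of N 0 z] nrm_0[of N] by simp

lemma dn_tri: "is_norm N \<Longrightarrow> dual_norm N (x + y) \<le> dual_norm N x + dual_norm N y"
  by (rule dn_le) (auto simp: inner_add_right intro: add_mono dn_ge)

lemma dn_hom: "is_norm N \<Longrightarrow> a \<ge> 0 \<Longrightarrow> dual_norm N (a *\<^sub>R x) \<le> a * dual_norm N x"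
  by (rule dn_le) (auto intro: mult_left_mono dn_ge)

lemma dn_upper:
  fixes N :: "real^'n \<Rightarrow> real"
  assumes "is_norm N"
  shows "\<exists>B>0. \<forall>z. dual_norm N z \<le> B * norm z"
proof -
  obtain a where a: "a > 0" "\<And>x. a * norm x \<le> N x" using nrm_lower[OF assms] by blast
  have "dual_norm N z \<le> (1/a) * norm z" for z
  proof (rule dn_le[OF assms])
    fix y assume "N y \<le> 1"
    then have "norm y \<le> 1 / a" using a(2)[of y] a(1) by (simp add: field_simps)
    then show "y \<bullet> z \<le> (1/a) * norm z"
      by (meson Cauchy_Schwarz_ineq2 abs_le_D1 mult_right_mono norm_ge_zero order_trans)
  qed
  then show ?thesis using a(1) by (metis divide_pos_pos zero_less_one)
qed

lemma dn_pair:
  assumes "is_norm N"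
  shows "l \<bullet> w \<le> dual_norm N l * N w"
proof (cases "w = 0")
  case True then show ?thesis by (simp add: nrm_0[OF assms])
next
  case False
  then have pos: "N w > 0" using nrm_eq0[OF assms] nrm_nonneg[OF assms] by (metis less_eq_real_def)
  have "N ((1 / N w) *\<^sub>R w) \<le> 1" using pos by (simp add: nrm_scale[OF assms])
  then have "((1 / N w) *\<^sub>R w) \<bullet> l \<le> dual_norm N l" by (rule dn_ge[OF assms])
  then have "(l \<bullet> w) / N w \<le> dual_norm N l" by (simp add: inner_commute)
  then show ?thesis using pos by (simp add: field_simps)
qed

section \<open>Induced norm\<close>

lemma ex_unit:
  fixes N :: "real^'n \<Rightarrow> real"
  assumes "is_norm N" shows "\<exists>x. N x = 1"
proof -
  obtain b :: "real^'n" where b: "b \<in> Basis" using nonempty_Basis by blast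
  then have "b \<noteq> 0" by auto
  then have "N b > 0" using nrm_eq0[OF assms] nrm_nonneg[OF assms] by (metis less_eq_real_def)
  then have "N ((1 / N b) *\<^sub>R b) = 1" by (simp add: nrm_scale[OF assms])
  then show ?thesis by blast
qed

lemma ind_bdd:
  fixes N :: "real^'n \<Rightarrow> real"
  assumes "is_norm N"
  shows "bdd_above ((\<lambda>x. N (M *v x)) ` {x. N x = 1})"
proof -
  obtain a where a: "a > 0" "\<And>x. a * norm x \<le> N x" using nrm_lower[OF assms] by blast
  obtain B where B: "B > 0" "\<And>x. N x \<le> B * norm x" using nrm_upper[OF assms] by blast
  obtain K where K: "\<And>x. norm (M *v x) \<le> norm x * K"
    using bounded_linear.bounded[OF matrix_vector_mul_bounded_linear[of M]] by blast
  have "N (M *v x) \<le> B * ((1/a) * \<bar>K\<bar>)" if "N x = 1" for x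
  proof -
    have nx: "norm x \<le> 1/a" using a(2)[of x] that a(1) by (simp add: field_simps)
    have "N (M *v x) \<le> B * norm (M *v x)" by (rule B(2))
    also have "\<dots> \<le> B * (norm x * \<bar>K\<bar>)" using K[of x] B(1)
      by (meson abs_ge_self mult_left_mono norm_ge_zero order_trans less_imp_le)
    also have "\<dots> \<le> B * ((1/a) * \<bar>K\<bar>)" using nx B(1)
      by (intro mult_left_mono mult_right_mono) auto
    finally show ?thesis .
  qed
  then show ?thesis by (intro bdd_aboveI2[where M="B * ((1/a) * \<bar>K\<bar>)"]) auto
qed

lemma ind_ge: "is_norm N \<Longrightarrow> N x = 1 \<Longrightarrow> N (M *v x) \<le> ind_norm N M"
  unfolding ind_norm_def by (rule cSUP_upper[OF _ ind_bdd]) auto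

lemma ind_le: "is_norm N \<Longrightarrow> (\<And>x. N x = 1 \<Longrightarrow> N (M *v x) \<le> C) \<Longrightarrow> ind_norm N M \<le> C"
  unfolding ind_norm_def by (rule cSUP_least) (use ex_unit[of N] in auto)

lemma ind_nonneg: "is_norm N \<Longrightarrow> ind_norm N M \<ge> 0"
  using ex_unit[of N] ind_ge[of N _ M] nrm_nonneg[of N] by (meson order_trans)

lemma ind_mult:
  assumes "is_norm N"
  shows "N (M *v x) \<le> ind_norm N M * N x"
proof (cases "x = 0")
  case True then show ?thesis by (simp add: nrm_0[OF assms])
next
  case False
  then have pos: "N x > 0" using nrm_eq0[OF assms] nrm_nonneg[OF assms] by (metis less_eq_real_def)
  have "N ((1 / N x) *\<^sub>R x) = 1" using pos by (simp add: nrm_scale[OF assms])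
  then have "N (M *v ((1 / N x) *\<^sub>R x)) \<le> ind_norm N M" by (rule ind_ge[OF assms])
  then have "N x * N (M *v ((1 / N x) *\<^sub>R x)) \<le> N x * ind_norm N M" using pos by simp
  moreover have "N x * N (M *v ((1 / N x) *\<^sub>R x)) = N (M *v x)"
    using pos by (simp add: matrix_vector_mult_scaleR nrm_scale[OF assms])
  ultimately show ?thesis by (simp add: mult.commute)
qed



lemma Mv_expand: "(mat 1 + s *\<^sub>R A) *v x = x + s *\<^sub>R (A *v (x::real^'n))"
  by (simp add: matrix_vector_mult_add_rdistrib scaleR_matrix_vector_assoc[symmetric])

lemma LN:
  fixes N :: "real^'n \<Rightarrow> real" and A :: "real^'n^'n"
  assumes nN: "is_norm N" and mu: "log_norm N A \<le> mu" and ep: "\<epsilon> > 0"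
  shows "eventually (\<lambda>s. ind_norm N (mat 1 + s *\<^sub>R A) \<le> 1 + s * (mu + \<epsilon>)) (at_right 0)"
proof -
  define \<phi> where "\<phi> s = ind_norm N (mat 1 + s *\<^sub>R A)" for s
  define g where "g s = (\<phi> s - 1) / s" for s
  have mono: "g s1 \<le> g s2" if s: "0 < s1" "s1 \<le> s2" for s1 s2
  proof -
    have s2: "s2 > 0" using s by simp
    have "\<phi> s1 \<le> (1 - s1/s2) + (s1/s2) * \<phi> s2"
      unfolding \<phi>_def
    proof (rule ind_le[OF nN])
      fix x :: "real^'n" assume x: "N x = 1"
      have eq: "x + s1 *\<^sub>R (A *v x) = (1 - s1/s2) *\<^sub>R x + (s1/s2) *\<^sub>R (x + s2 *\<^sub>R (A *v x))"
        using s2 by (simp add: algebra_simps)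
      have "N ((mat 1 + s1 *\<^sub>R A) *v x) = N ((1 - s1/s2) *\<^sub>R x + (s1/s2) *\<^sub>R (x + s2 *\<^sub>R (A *v x)))"
        by (simp add: Mv_expand eq)
      also have "\<dots> \<le> N ((1 - s1/s2) *\<^sub>R x) + N ((s1/s2) *\<^sub>R (x + s2 *\<^sub>R (A *v x)))"
        by (rule nrm_tri[OF nN])
      also have "\<dots> = (1 - s1/s2) + (s1/s2) * N ((mat 1 + s2 *\<^sub>R A) *v x)"
        using s s2 x by (simp add: nrm_scale[OF nN] Mv_expand)
      also have "\<dots> \<le> (1 - s1/s2) + (s1/s2) * ind_norm N (mat 1 + s2 *\<^sub>R A)"
        using ind_ge[OF nN x, of "mat 1 + s2 *\<^sub>R A"] s s2 by (simp add: mult_left_mono divide_right_mono)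
      finally show "N ((mat 1 + s1 *\<^sub>R A) *v x) \<le> 1 - s1 / s2 + s1 / s2 * ind_norm N (mat 1 + s2 *\<^sub>R A)" .
    qed
    then have "\<phi> s1 - 1 \<le> s1 * ((\<phi> s2 - 1) / s2)" by (simp add: algebra_simps diff_divide_distrib)
    then show ?thesis unfolding g_def using s by (simp add: field_simps)
  qed
  obtain x1 where x1: "N x1 = 1" using ex_unit[OF nN] by blast
  have lower: "g s \<ge> - N (A *v x1)" if "s > 0" for s
  proof -
    have "1 - s * N (A *v x1) \<le> N (x1 + s *\<^sub>R (A *v x1))"
      using nrm_rev[OF nN, of x1 "- (s *\<^sub>R (A *v x1))"] x1 that
      by (simp add: nrm_neg[OF nN] nrm_scale[OF nN])
    also have "\<dots> \<le> \<phi> s" unfolding \<phi>_def using ind_ge[OF nN x1, of "mat 1 + s *\<^sub>R A"] by (simp only: Mv_expand)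
    finally show ?thesis unfolding g_def using that by (simp add: field_simps)
  qed
  define L where "L = Inf (g ` {0<..})"
  have bdd: "bdd_below (g ` {0<..})" using lower by (intro bdd_belowI2[where m="- N (A *v x1)"]) auto
  have ne: "g ` {0<..} \<noteq> {}" by auto
  have Lle: "L \<le> g s" if "s > 0" for s unfolding L_def using bdd that by (intro cInf_lower) auto
  have lim: "(g \<longlongrightarrow> L) (at_right 0)"
  proof (rule order_tendstoI)
    fix y assume "y < L"
    show "eventually (\<lambda>s. y < g s) (at_right 0)"
      by (rule eventually_mono[OF eventually_at_right_less[of "0::real"]]) (use Lle \<open>y < L\<close> in force)
  next
    fix y assume "L < y"
    then obtain s0 where s0: "s0 > 0" "g s0 < y" unfolding L_def using cInf_less_iff[OF ne bdd] by auto
    then show "eventually (\<lambda>s. g s < y) (at_right 0)"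
      unfolding eventually_at_right_field using mono by (meson le_less_trans less_imp_le)
  qed
  have "log_norm N A = L" unfolding log_norm_def
    using tendsto_Lim[OF trivial_limit_at_right_real lim] unfolding g_def \<phi>_def by simp
  then have "L < mu + \<epsilon>" using mu ep by simp
  then have "eventually (\<lambda>s. g s < mu + \<epsilon>) (at_right 0)" using lim order_tendstoD(2) by blast
  then show ?thesis using eventually_at_right_less[of "0::real"]
  proof (eventually_elim)
    case (elim s)
    then show ?case unfolding g_def \<phi>_def by (simp add: field_simps)
  qed
qed

lemma bwd:
  fixes P :: "'a::real_vector \<Rightarrow> real"
  assumes tri: "\<And>x y. P (x + y) \<le> P x + P y" and hom: "\<And>a x. a \<ge> 0 \<Longrightarrow> P (a *\<^sub>R x) \<le> a * P x"
    and fwd: "\<And>\<epsilon>. \<epsilon> > 0 \<Longrightarrow> eventually (\<lambda>s. P (e + s *\<^sub>R d) \<le> P e + \<epsilon> * s) (at_right 0)"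
    and h: "h \<ge> 0"
  shows "P e \<le> P (e - h *\<^sub>R d)"
proof (cases "h = 0")
  case True then show ?thesis by simp
next
  case False
  then have h0: "h > 0" using h by simp
  show ?thesis
  proof (rule field_le_epsilon)
    fix \<epsilon> :: real assume ep: "\<epsilon> > 0"
    have "eventually (\<lambda>s. P (e + s *\<^sub>R d) \<le> P e + (\<epsilon>/h) * s) (at_right 0)"
      using fwd[of "\<epsilon>/h"] ep h0 by simp
    then obtain b where b: "b > 0" "\<And>s. s > 0 \<Longrightarrow> s < b \<Longrightarrow> P (e + s *\<^sub>R d) \<le> P e + (\<epsilon>/h) * s"
      unfolding eventually_at_right_field by auto
    define s where "s = b / 2"
    have s: "s > 0" "P (e + s *\<^sub>R d) \<le> P e + (\<epsilon>/h) * s" using b(1) b(2)[of s] unfolding s_def by auto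
    have sh: "s + h > 0" using s h0 by simp
    have eq: "e = (s/(s+h)) *\<^sub>R (e - h *\<^sub>R d) + (h/(s+h)) *\<^sub>R (e + s *\<^sub>R d)"
    proof -
      have "(s/(s+h)) *\<^sub>R (e - h *\<^sub>R d) + (h/(s+h)) *\<^sub>R (e + s *\<^sub>R d)
          = ((s/(s+h)) + (h/(s+h))) *\<^sub>R e + ((h/(s+h)) * s - (s/(s+h)) * h) *\<^sub>R d"
        by (simp add: algebra_simps)
      also have "\<dots> = e" using sh by (simp add: add_divide_distrib[symmetric])
      finally show ?thesis by simp
    qed
    have "P e \<le> P ((s/(s+h)) *\<^sub>R (e - h *\<^sub>R d)) + P ((h/(s+h)) *\<^sub>R (e + s *\<^sub>R d))"
      using tri eq by metis
    also have "\<dots> \<le> (s/(s+h)) * P (e - h *\<^sub>R d) + (h/(s+h)) * P (e + s *\<^sub>R d)"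
      using hom[of "s/(s+h)" "e - h *\<^sub>R d"] hom[of "h/(s+h)" "e + s *\<^sub>R d"] sh s h0 by (intro add_mono) auto
    also have "\<dots> \<le> (s/(s+h)) * P (e - h *\<^sub>R d) + (h/(s+h)) * (P e + (\<epsilon>/h) * s)"
      using s sh h0 by (intro add_mono mult_left_mono) auto
    finally have "(s+h) * P e \<le> (s+h) * ((s/(s+h)) * P (e - h *\<^sub>R d) + (h/(s+h)) * (P e + (\<epsilon>/h) * s))"
      using sh by (intro mult_left_mono) auto
    also have "\<dots> = (s+h) * (s/(s+h)) * P (e - h *\<^sub>R d) + (s+h) * (h/(s+h)) * P e + (s+h) * (h/(s+h)) * ((\<epsilon>/h) * s)"
      by (simp only: distrib_left mult.assoc)
    also have "\<dots> = s * P (e - h *\<^sub>R d) + h * P e + h * ((\<epsilon>/h) * s)"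
      using sh by simp
    also have "\<dots> = s * P (e - h *\<^sub>R d) + h * P e + \<epsilon> * s"
      using h0 by simp
    finally have "(s+h) * P e \<le> s * P (e - h *\<^sub>R d) + h * P e + \<epsilon> * s" .
    then have "s * P e \<le> s * (P (e - h *\<^sub>R d) + \<epsilon>)" by (simp add: algebra_simps)
    then show "P e \<le> P (e - h *\<^sub>R d) + \<epsilon>" using s by simp
  qed
qed

lemma dn_fwd:
  fixes N :: "real^'n \<Rightarrow> real" and A :: "real^'n^'n"
  assumes nN: "is_norm N" and mu: "log_norm N A \<le> 0" and ep: "\<epsilon> > 0"
  shows "eventually (\<lambda>s. dual_norm N (l + s *\<^sub>R (transpose A *v l)) \<le> dual_norm N l + \<epsilon> * s) (at_right 0)"
proof -
  define \<epsilon>' where "\<epsilon>' = \<epsilon> / (dual_norm N l + 1)"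
  have e': "\<epsilon>' > 0" unfolding \<epsilon>'_def using ep dn_nonneg[OF nN, of l] by simp
  have e'b: "\<epsilon>' * dual_norm N l \<le> \<epsilon>" unfolding \<epsilon>'_def using ep dn_nonneg[OF nN, of l]
    by (simp add: field_simps)
  show ?thesis using LN[OF nN mu e'] eventually_at_right_less[of "0::real"]
  proof eventually_elim
    case (elim s)
    let ?M = "mat 1 + s *\<^sub>R A"
    have "dual_norm N (l + s *\<^sub>R (transpose A *v l)) \<le> ind_norm N ?M * dual_norm N l"
    proof (rule dn_le[OF nN])
      fix y assume y: "N y \<le> 1"
      have "y \<bullet> (l + s *\<^sub>R (transpose A *v l)) = l \<bullet> (?M *v y)"
        by (simp add: Mv_expand inner_add_right inner_add_left dot_lmul_matrix inner_commute[of y])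
      also have "\<dots> \<le> dual_norm N l * N (?M *v y)" by (rule dn_pair[OF nN])
      also have "\<dots> \<le> dual_norm N l * (ind_norm N ?M * N y)"
        by (rule mult_left_mono[OF ind_mult[OF nN] dn_nonneg[OF nN]])
      also have "\<dots> \<le> dual_norm N l * ind_norm N ?M"
        using y dn_nonneg[OF nN, of l] ind_nonneg[OF nN, of ?M]
        by (intro mult_left_mono) (auto simp: mult_left_le)
      finally show "y \<bullet> (l + s *\<^sub>R (transpose A *v l)) \<le> ind_norm N ?M * dual_norm N l"
        by (simp add: mult.commute)
    qed
    also have "\<dots> \<le> (1 + s * \<epsilon>') * dual_norm N l"
      using elim dn_nonneg[OF nN, of l] by (intro mult_right_mono) auto
    also have "\<dots> \<le> dual_norm N l + \<epsilon> * s"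
      using e'b elim by (simp add: algebra_simps mult_left_mono)
    finally show ?case .
  qed
qed



lemma onorm_mat_le:
  fixes M :: "real^'n^'m"
  shows "onorm ((*v) M) \<le> real CARD('m) * real CARD('n) * norm M"
proof (rule onorm_le_matrix_component)
  fix i j
  have "\<bar>M $ i $ j\<bar> \<le> norm (M $ i)" by (rule component_le_norm_cart)
  also have "\<dots> \<le> norm M" by (rule Finite_Cartesian_Product.norm_nth_le)
  finally show "\<bar>M $ i $ j\<bar> \<le> norm M" .
qed

lemma PN:
  fixes N :: "real^'n \<Rightarrow> real" and F :: "real^'n \<Rightarrow> real^'n" and A :: "real^'n \<Rightarrow> real^'n^'n"
  assumes nN: "is_norm N"
    and der: "\<And>z. (F has_derivative (\<lambda>h. A z *v h)) (at z)"
    and cont: "continuous_on UNIV A"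
    and ln: "\<And>z. log_norm N (A z) \<le> 0"
    and ep: "\<epsilon> > 0"
  shows "eventually (\<lambda>s. N (x - y + s *\<^sub>R (F x - F y)) \<le> N (x - y) + \<epsilon> * s) (at_right 0)"
proof (cases "x = y")
  case True
  show ?thesis
    by (rule eventually_mono[OF eventually_at_right_less[of "0::real"]])
       (use True ep in \<open>simp add: nrm_0[OF nN]\<close>)
next
  case False
  define e where "e = x - y"
  have e0: "e \<noteq> 0" using False unfolding e_def by simp
  have Ne: "N e > 0" using e0 nrm_eq0[OF nN] nrm_nonneg[OF nN] by (metis less_eq_real_def)
  obtain Bn where Bn: "Bn > 0" "\<And>z. N z \<le> Bn * norm z" using nrm_upper[OF nN] by blast
  define CB where "CB = real CARD('n) * real CARD('n)"
  have CB: "CB > 0" unfolding CB_def by simp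
  define \<gamma> where "\<gamma> \<theta> = y + \<theta> *\<^sub>R e" for \<theta> :: real
  have contg: "continuous_on {0..1} (\<lambda>\<theta>. A (\<gamma> \<theta>))"
    by (rule continuous_on_compose2[OF cont]) (auto simp: \<gamma>_def intro!: continuous_intros)
  have uc: "uniformly_continuous_on {0..1} (\<lambda>\<theta>. A (\<gamma> \<theta>))"
    by (rule compact_uniformly_continuous[OF contg compact_Icc])
  define \<epsilon>1 where "\<epsilon>1 = \<epsilon> / (2 * Bn * norm e * CB)"
  have e1: "\<epsilon>1 > 0" unfolding \<epsilon>1_def using ep Bn CB e0 by simp
  obtain \<eta> where eta: "\<eta> > 0" "\<And>\<theta> \<theta>'. \<theta> \<in> {0..1} \<Longrightarrow> \<theta>' \<in> {0..1} \<Longrightarrow> dist \<theta>' \<theta> < \<eta> \<Longrightarrow>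
      dist (A (\<gamma> \<theta>')) (A (\<gamma> \<theta>)) < \<epsilon>1"
    using uc e1 unfolding uniformly_continuous_on_def by metis
  obtain m :: nat where m: "m > 0" "inverse (real m) < \<eta>" using ex_inverse_of_nat_less[OF eta(1)] by blast
  define th where "th j = real j / real m" for j :: nat
  define Aj where "Aj j = A (\<gamma> (th j))" for j
  define Fg where "Fg j = F (\<gamma> (th j))" for j
  define Rj where "Rj j = Fg (Suc j) - Fg j - Aj j *v ((1 / real m) *\<^sub>R e)" for j
  have Rb: "norm (Rj j) \<le> norm e / real m * (CB * \<epsilon>1)" if j: "j < m" for j
  proof -
    define S where "S = \<gamma> ` {th j..th (Suc j)}"
    have diff: "\<gamma> (th (Suc j)) - \<gamma> (th j) = (1 / real m) *\<^sub>R e"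
      unfolding \<gamma>_def th_def using m by (simp add: algebra_simps add_divide_distrib scaleR_add_left)
    have thj: "0 \<le> th j" "th (Suc j) \<le> 1" "th (Suc j) - th j = 1 / real m"
      unfolding th_def using j m by (auto simp: field_simps)
    have "norm (F (\<gamma> (th (Suc j))) - F (\<gamma> (th j)) - A (\<gamma> (th j)) *v (\<gamma> (th (Suc j)) - \<gamma> (th j)))
        \<le> norm (\<gamma> (th (Suc j)) - \<gamma> (th j)) * (CB * \<epsilon>1)"
    proof (rule differentiable_bound_linearization[where S=S and f'="\<lambda>z h. A z *v h"])
      fix t :: real assume t: "t \<in> {0..1}"
      have "\<gamma> (th j) + t *\<^sub>R (\<gamma> (th (Suc j)) - \<gamma> (th j)) = \<gamma> (th j + t / real m)"
        unfolding diff unfolding \<gamma>_def by (simp add: algebra_simps)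
      moreover have "th j + t / real m \<in> {th j..th (Suc j)}" using t thj m
        by (auto simp: field_simps)
      ultimately show "\<gamma> (th j) + t *\<^sub>R (\<gamma> (th (Suc j)) - \<gamma> (th j)) \<in> S" unfolding S_def by simp
    next
      fix z assume "z \<in> S"
      show "(F has_derivative (\<lambda>h. A z *v h)) (at z within S)"
        by (rule has_derivative_at_withinI[OF der])
    next
      fix z assume "z \<in> S"
      then obtain \<theta> where th: "\<theta> \<in> {th j..th (Suc j)}" "z = \<gamma> \<theta>" unfolding S_def by auto
      have "(\<lambda>h. A z *v h) - (\<lambda>h. A (\<gamma> (th j)) *v h) = (*v) (A z - A (\<gamma> (th j)))"
        by (auto simp: fun_diff_def matrix_vector_mult_diff_rdistrib)
      then have "onorm ((\<lambda>h. A z *v h) - (\<lambda>h. A (\<gamma> (th j)) *v h)) \<le> CB * norm (A z - A (\<gamma> (th j)))"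
        using onorm_mat_le[of "A z - A (\<gamma> (th j))"] unfolding CB_def by simp
      also have "\<dots> \<le> CB * \<epsilon>1"
      proof -
        have "\<theta> \<in> {0..1}" "th j \<in> {0..1}" using th thj by auto
        moreover have "dist \<theta> (th j) < \<eta>" using th thj m(2)
          by (auto simp: dist_real_def inverse_eq_divide)
        ultimately have "dist (A (\<gamma> \<theta>)) (A (\<gamma> (th j))) < \<epsilon>1" using eta(2)[of "th j" \<theta>] by blast
        then show ?thesis using CB th(2) by (simp add: dist_norm)
      qed
      finally show "onorm ((\<lambda>h. A z *v h) - (\<lambda>h. A (\<gamma> (th j)) *v h)) \<le> CB * \<epsilon>1" .
    next
      have "th j \<le> th (Suc j)" unfolding th_def by (simp add: divide_right_mono)
      then show "\<gamma> (th j) \<in> S" unfolding S_def by auto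
    qed
    then show ?thesis unfolding Rj_def Fg_def Aj_def diff using m by simp
  qed
  define \<epsilon>2 where "\<epsilon>2 = \<epsilon> / (2 * N e)"
  have e2: "\<epsilon>2 > 0" unfolding \<epsilon>2_def using ep Ne by simp
  have ev: "eventually (\<lambda>s. \<forall>j\<in>{..<m}. ind_norm N (mat 1 + s *\<^sub>R Aj j) \<le> 1 + s * (0 + \<epsilon>2)) (at_right 0)"
    by (rule eventually_ball_finite) (use LN[OF nN ln e2] in \<open>auto simp: Aj_def\<close>)
  show ?thesis using ev eventually_at_right_less[of "0::real"]
  proof eventually_elim
    case (elim s)
    have sumeq: "e + s *\<^sub>R (F x - F y) = (\<Sum>j<m. (1 / real m) *\<^sub>R ((mat 1 + s *\<^sub>R Aj j) *v e) + s *\<^sub>R Rj j)"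
    proof -
      have "(\<Sum>j<m. (1 / real m) *\<^sub>R ((mat 1 + s *\<^sub>R Aj j) *v e) + s *\<^sub>R Rj j)
          = (\<Sum>j<m. (1 / real m) *\<^sub>R e + s *\<^sub>R (Fg (Suc j) - Fg j))"
        by (rule sum.cong) (auto simp: Rj_def Mv_expand matrix_vector_mult_scaleR algebra_simps scaleR_matrix_vector_assoc[symmetric])
      also have "\<dots> = e + s *\<^sub>R (Fg m - Fg 0)"
      proof -
        have c: "(\<Sum>j<m. (1 / real m) *\<^sub>R e) = e" by (subst scaleR_sum_left[symmetric]) (use m in simp)
        show ?thesis by (simp only: sum.distrib c) (simp add: scaleR_sum_right[symmetric] sum_lessThan_telescope)
      qed
      also have "\<dots> = e + s *\<^sub>R (F x - F y)"
        using m unfolding Fg_def th_def \<gamma>_def e_def by simp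
      finally show ?thesis by simp
    qed
    have "N (e + s *\<^sub>R (F x - F y)) \<le> (\<Sum>j<m. N ((1 / real m) *\<^sub>R ((mat 1 + s *\<^sub>R Aj j) *v e) + s *\<^sub>R Rj j))"
      unfolding sumeq by (rule nrm_sum[OF nN]) simp
    also have "\<dots> \<le> (\<Sum>j<m. (1 / real m) * ((1 + s * \<epsilon>2) * N e) + s * (Bn * (norm e / real m * (CB * \<epsilon>1))))"
    proof (rule sum_mono)
      fix j assume j: "j \<in> {..<m}"
      have "N ((1 / real m) *\<^sub>R ((mat 1 + s *\<^sub>R Aj j) *v e) + s *\<^sub>R Rj j)
          \<le> N ((1 / real m) *\<^sub>R ((mat 1 + s *\<^sub>R Aj j) *v e)) + N (s *\<^sub>R Rj j)" by (rule nrm_tri[OF nN])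
      also have "\<dots> = (1 / real m) * N ((mat 1 + s *\<^sub>R Aj j) *v e) + s * N (Rj j)"
        using elim by (simp add: nrm_scale[OF nN])
      also have "\<dots> \<le> (1 / real m) * ((1 + s * \<epsilon>2) * N e) + s * (Bn * (norm e / real m * (CB * \<epsilon>1)))"
      proof (rule add_mono)
        have "N ((mat 1 + s *\<^sub>R Aj j) *v e) \<le> ind_norm N (mat 1 + s *\<^sub>R Aj j) * N e" by (rule ind_mult[OF nN])
        also have "\<dots> \<le> (1 + s * \<epsilon>2) * N e" using elim j Ne by (intro mult_right_mono) auto
        finally show "(1 / real m) * N ((mat 1 + s *\<^sub>R Aj j) *v e) \<le> (1 / real m) * ((1 + s * \<epsilon>2) * N e)"
          by (simp add: divide_right_mono)
      next
        have "N (Rj j) \<le> Bn * norm (Rj j)" by (rule Bn(2))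
        also have "\<dots> \<le> Bn * (norm e / real m * (CB * \<epsilon>1))" using Rb[of j] j Bn(1) by (intro mult_left_mono) auto
        finally show "s * N (Rj j) \<le> s * (Bn * (norm e / real m * (CB * \<epsilon>1)))" using elim by (intro mult_left_mono) auto
      qed
      finally show "N ((1 / real m) *\<^sub>R ((mat 1 + s *\<^sub>R Aj j) *v e) + s *\<^sub>R Rj j)
          \<le> (1 / real m) * ((1 + s * \<epsilon>2) * N e) + s * (Bn * (norm e / real m * (CB * \<epsilon>1)))" .
    qed
    also have "\<dots> = (1 + s * \<epsilon>2) * N e + s * (Bn * norm e * CB * \<epsilon>1)"
      using m by (simp add: field_simps)
    also have "\<dots> = N e + \<epsilon> * s"
      unfolding \<epsilon>1_def \<epsilon>2_def using Ne Bn CB e0 by (simp add: field_simps)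
    finally show ?case unfolding e_def .
  qed
qed



lemma tdiv_elem:
  assumes p: "p tagged_division_of {a0..b0::real}" and rK: "(r, K) \<in> p"
  shows "\<exists>a b. K = {a..b} \<and> a \<le> r \<and> r \<le> b \<and> a0 \<le> a \<and> b \<le> b0"
proof -
  obtain a b where K: "K = cbox a b" using tagged_division_ofD(4)[OF p rK] by blast
  have "r \<in> K" "K \<subseteq> {a0..b0}" using tagged_division_ofD(2,3)[OF p rK] by auto
  then show ?thesis unfolding K by (intro exI[of _ a] exI[of _ b]) auto
qed

lemma int_sub:
  fixes g :: "real \<Rightarrow> 'a::banach"
  assumes h: "\<And>t. t \<in> {a0..b0} \<Longrightarrow> (g has_integral (e t - e a0)) {a0..t}"
    and r: "a0 \<le> r" "r \<le> b" "b \<le> b0"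
  shows "integral {r..b} g = e b - e r"
proof -
  have ib: "(g has_integral (e b - e a0)) {a0..b}" using h r by auto
  have ir: "(g has_integral (e r - e a0)) {a0..r}" using h r by auto
  have "integral {a0..r} g + integral {r..b} g = integral {a0..b} g"
    using r ib by (intro Henstock_Kurzweil_Integration.integral_combine) auto
  then show ?thesis using integral_unique[OF ib] integral_unique[OF ir] by (simp add: algebra_simps)
qed

lemma comp0:
  fixes g :: "real \<Rightarrow> real^'n" and F :: "real \<Rightarrow> real"
  assumes ab: "a0 \<le> b0" and intg: "g integrable_on {a0..b0}" and B: "B \<ge> 0"
    and loc: "\<And>r. r \<in> {a0..b0} \<Longrightarrow> \<exists>\<delta>>0. \<forall>a b. a0 \<le> a \<longrightarrow> a \<le> r \<longrightarrow> r \<le> b \<longrightarrow> b \<le> b0 \<longrightarrow> b - a < \<delta> \<longrightarrow>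
      F b - F r \<le> (b - r) * C + B * norm (integral {r..b} g - (b - r) *\<^sub>R g r) \<and>
      F r - F a \<le> (r - a) * C + B * norm (integral {a..r} g - (r - a) *\<^sub>R g r)"
  shows "F b0 - F a0 \<le> (b0 - a0) * C"
proof (rule field_le_epsilon)
  fix \<epsilon> :: real assume ep: "\<epsilon> > 0"
  define \<epsilon>' where "\<epsilon>' = \<epsilon> / (2 * B + 1)"
  have e': "\<epsilon>' > 0" unfolding \<epsilon>'_def using ep B by simp
  have e'B: "B * (2 * \<epsilon>') \<le> \<epsilon>" unfolding \<epsilon>'_def using ep B by (simp add: field_simps)
  have intg': "g integrable_on cbox a0 b0" using intg by simp
  obtain \<gamma>1 where g1: "gauge \<gamma>1"
    and hen: "\<And>p. p tagged_partial_division_of cbox a0 b0 \<Longrightarrow> \<gamma>1 fine p \<Longrightarrow>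
       (\<Sum>(x,k)\<in>p. norm (Henstock_Kurzweil_Integration.content k *\<^sub>R g x - integral k g)) < \<epsilon>'"
    by (rule Henstock_lemma[OF intg' e']) blast
  have "\<forall>r. \<exists>\<delta>. r \<in> {a0..b0} \<longrightarrow> \<delta> > 0 \<and> (\<forall>a b. a0 \<le> a \<longrightarrow> a \<le> r \<longrightarrow> r \<le> b \<longrightarrow> b \<le> b0 \<longrightarrow> b - a < \<delta> \<longrightarrow>
      F b - F r \<le> (b - r) * C + B * norm (integral {r..b} g - (b - r) *\<^sub>R g r) \<and>
      F r - F a \<le> (r - a) * C + B * norm (integral {a..r} g - (r - a) *\<^sub>R g r))"
    using loc by metis
  then obtain d where d: "\<And>r. r \<in> {a0..b0} \<Longrightarrow> d r > 0 \<and> (\<forall>a b. a0 \<le> a \<longrightarrow> a \<le> r \<longrightarrow> r \<le> b \<longrightarrow> b \<le> b0 \<longrightarrow> b - a < d r \<longrightarrow>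
      F b - F r \<le> (b - r) * C + B * norm (integral {r..b} g - (b - r) *\<^sub>R g r) \<and>
      F r - F a \<le> (r - a) * C + B * norm (integral {a..r} g - (r - a) *\<^sub>R g r))"
    unfolding choice_iff by blast
  define d' where "d' r = (if r \<in> {a0..b0} then d r else 1)" for r
  have d'pos: "d' r > 0" for r unfolding d'_def using d by auto
  define \<gamma> where "\<gamma> r = \<gamma>1 r \<inter> ball r (d' r / 2)" for r
  have gg: "gauge \<gamma>" unfolding \<gamma>_def
    using g1 gauge_ball_dependent[of "\<lambda>r. d' r / 2"] d'pos by auto
  obtain p where p: "p tagged_division_of {a0..b0}" "\<gamma> fine p" using fine_division_exists_real[OF gg] by metis
  have finp: "finite p" using p(1) by blast
  define E1 where "E1 = (\<lambda>(r, K). norm (integral {r..Sup K} g - (Sup K - r) *\<^sub>R g r))"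
  define E2 where "E2 = (\<lambda>(r, K). norm (integral {Inf K..r} g - (r - Inf K) *\<^sub>R g r))"
  have trm: "F (Sup K) - F (Inf K) \<le> (Sup K - Inf K) * C + B * (E1 (r, K) + E2 (r, K))" if rK: "(r, K) \<in> p" for r K
  proof -
    obtain a b where K: "K = {a..b}" "a \<le> r" "r \<le> b" "a0 \<le> a" "b \<le> b0" using tdiv_elem[OF p(1) rK] by blast
    have SI: "Sup K = b" "Inf K = a" using K by auto
    have "K \<subseteq> \<gamma> r" using p(2) rK unfolding fine_def by blast
    then have "K \<subseteq> ball r (d r / 2)" unfolding \<gamma>_def d'_def using K by auto
    moreover have "a \<in> K" "b \<in> K" using K by auto
    ultimately have "a \<in> ball r (d r / 2)" "b \<in> ball r (d r / 2)" by auto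
    then have "b - a < d r" by (auto simp: dist_real_def abs_if split: if_splits)
    then have "F b - F r \<le> (b - r) * C + B * norm (integral {r..b} g - (b - r) *\<^sub>R g r) \<and>
      F r - F a \<le> (r - a) * C + B * norm (integral {a..r} g - (r - a) *\<^sub>R g r)"
      using d[of r] K by auto
    moreover have "E1 (r, K) = norm (integral {r..b} g - (b - r) *\<^sub>R g r)" by (simp add: E1_def SI)
    moreover have "E2 (r, K) = norm (integral {a..r} g - (r - a) *\<^sub>R g r)" by (simp add: E2_def SI)
    ultimately show ?thesis unfolding SI by (simp add: algebra_simps)
  qed
  have sumlen: "(\<Sum>(r, K)\<in>p. Sup K - Inf K) = b0 - a0"
    using additive_tagged_division_1[OF ab p(1), of "\<lambda>x. x"] by simp
  have E1sum: "(\<Sum>rK\<in>p. E1 rK) \<le> \<epsilon>'"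
  proof -
    define h where "h = (\<lambda>(r::real, K::real set). (r, {r..Sup K}))"
    define G where "G = (\<lambda>(x::real, k). norm (Henstock_Kurzweil_Integration.content k *\<^sub>R g x - integral k g))"
    have hK: "\<exists>a b. K = {a..b} \<and> a \<le> r \<and> r \<le> b \<and> a0 \<le> a \<and> b \<le> b0" if "(r, K) \<in> p" for r K
      using tdiv_elem[OF p(1) that] .
    have GE: "G (h rK) = E1 rK" if rKp: "rK \<in> p" for rK
    proof -
      obtain r K where rK: "rK = (r, K)" by (cases rK)
      obtain a b where K: "K = {a..b}" "a \<le> r" "r \<le> b" using hK rKp rK by blast
      show ?thesis unfolding rK G_def h_def E1_def using K by (simp add: norm_minus_commute)
    qed
    have part: "(h ` p) tagged_partial_division_of cbox a0 b0"
      unfolding tagged_partial_division_of_def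
    proof (intro conjI allI impI)
      show "finite (h ` p)" using finp by simp
    next
      fix x k assume "(x, k) \<in> h ` p"
      then obtain r K where rK: "(r, K) \<in> p" "x = r" "k = {r..Sup K}" unfolding h_def by auto
      obtain a b where K: "K = {a..b}" "a \<le> r" "r \<le> b" "a0 \<le> a" "b \<le> b0" using hK rK(1) by blast
      show "x \<in> k" "k \<subseteq> cbox a0 b0" "\<exists>a b. k = cbox a b" using K rK by auto
    next
      fix x1 k1 x2 k2 assume as: "(x1, k1) \<in> h ` p \<and> (x2, k2) \<in> h ` p \<and> (x1, k1) \<noteq> (x2, k2)"
      then obtain r1 K1 r2 K2 where r: "(r1, K1) \<in> p" "(r2, K2) \<in> p" "(x1, k1) = h (r1, K1)" "(x2, k2) = h (r2, K2)"
        by auto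
      then have ne: "(r1, K1) \<noteq> (r2, K2)" using as by auto
      have "interior K1 \<inter> interior K2 = {}" using tagged_division_ofD(5)[OF p(1) r(1,2) ne] .
      moreover have "k1 \<subseteq> K1" "k2 \<subseteq> K2" using r hK[OF r(1)] hK[OF r(2)] unfolding h_def by auto
      ultimately show "interior k1 \<inter> interior k2 = {}" using interior_mono by blast
    qed
    have fine: "\<gamma>1 fine (h ` p)"
    proof (rule fineI)
      fix x k assume "(x, k) \<in> h ` p"
      then obtain r K where rK: "(r, K) \<in> p" "x = r" "k = {r..Sup K}" unfolding h_def by auto
      obtain a b where K: "K = {a..b}" "a \<le> r" "r \<le> b" using hK rK(1) by blast
      have "K \<subseteq> \<gamma> r" using p(2) rK(1) unfolding fine_def by blast
      then show "k \<subseteq> \<gamma>1 x" using rK K unfolding \<gamma>_def by auto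
    qed
    have "sum G (h ` p) = sum (G \<circ> h) p"
    proof (rule sum.reindex_nontrivial[OF finp])
      fix u v assume uv: "u \<in> p" "v \<in> p" "u \<noteq> v" "h u = h v"
      obtain r1 K1 where u: "u = (r1, K1)" by (cases u)
      obtain r2 K2 where v: "v = (r2, K2)" by (cases v)
      obtain a1 b1 where K1: "K1 = {a1..b1}" "a1 \<le> r1" "r1 \<le> b1" using hK uv(1) u by blast
      obtain a2 b2 where K2: "K2 = {a2..b2}" "a2 \<le> r2" "r2 \<le> b2" using hK uv(2) v by blast
      have eq: "r1 = r2" "b1 = b2" using uv(4) K1 K2 unfolding u v h_def by auto
      have dis: "interior K1 \<inter> interior K2 = {}" using tagged_division_ofD(5)[OF p(1)] uv u v by blast
      have "r1 = b1"
      proof (rule ccontr)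
        assume "r1 \<noteq> b1"
        then have "(r1 + b1) / 2 \<in> interior K1 \<inter> interior K2" using K1 K2 eq by auto
        then show False using dis by blast
      qed
      then show "G (h u) = 0" unfolding G_def h_def u using K1 by simp
    qed
    then have "(\<Sum>rK\<in>p. E1 rK) = sum G (h ` p)" using GE by simp
    also have "\<dots> < \<epsilon>'" using hen[OF part fine] unfolding G_def by simp
    finally show ?thesis by simp
  qed
  have E2sum: "(\<Sum>rK\<in>p. E2 rK) \<le> \<epsilon>'"
  proof -
    define h where "h = (\<lambda>(r::real, K::real set). (r, {Inf K..r}))"
    define G where "G = (\<lambda>(x::real, k). norm (Henstock_Kurzweil_Integration.content k *\<^sub>R g x - integral k g))"
    have hK: "\<exists>a b. K = {a..b} \<and> a \<le> r \<and> r \<le> b \<and> a0 \<le> a \<and> b \<le> b0" if "(r, K) \<in> p" for r K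
      using tdiv_elem[OF p(1) that] .
    have GE: "G (h rK) = E2 rK" if rKp: "rK \<in> p" for rK
    proof -
      obtain r K where rK: "rK = (r, K)" by (cases rK)
      obtain a b where K: "K = {a..b}" "a \<le> r" "r \<le> b" using hK rKp rK by blast
      show ?thesis unfolding rK G_def h_def E2_def using K by (simp add: norm_minus_commute)
    qed
    have part: "(h ` p) tagged_partial_division_of cbox a0 b0"
      unfolding tagged_partial_division_of_def
    proof (intro conjI allI impI)
      show "finite (h ` p)" using finp by simp
    next
      fix x k assume "(x, k) \<in> h ` p"
      then obtain r K where rK: "(r, K) \<in> p" "x = r" "k = {Inf K..r}" unfolding h_def by auto
      obtain a b where K: "K = {a..b}" "a \<le> r" "r \<le> b" "a0 \<le> a" "b \<le> b0" using hK rK(1) by blast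
      show "x \<in> k" "k \<subseteq> cbox a0 b0" "\<exists>a b. k = cbox a b" using K rK by auto
    next
      fix x1 k1 x2 k2 assume as: "(x1, k1) \<in> h ` p \<and> (x2, k2) \<in> h ` p \<and> (x1, k1) \<noteq> (x2, k2)"
      then obtain r1 K1 r2 K2 where r: "(r1, K1) \<in> p" "(r2, K2) \<in> p" "(x1, k1) = h (r1, K1)" "(x2, k2) = h (r2, K2)"
        by auto
      then have ne: "(r1, K1) \<noteq> (r2, K2)" using as by auto
      have "interior K1 \<inter> interior K2 = {}" using tagged_division_ofD(5)[OF p(1) r(1,2) ne] .
      moreover have "k1 \<subseteq> K1" "k2 \<subseteq> K2" using r hK[OF r(1)] hK[OF r(2)] unfolding h_def by auto
      ultimately show "interior k1 \<inter> interior k2 = {}" using interior_mono by blast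
    qed
    have fine: "\<gamma>1 fine (h ` p)"
    proof (rule fineI)
      fix x k assume "(x, k) \<in> h ` p"
      then obtain r K where rK: "(r, K) \<in> p" "x = r" "k = {Inf K..r}" unfolding h_def by auto
      obtain a b where K: "K = {a..b}" "a \<le> r" "r \<le> b" using hK rK(1) by blast
      have "K \<subseteq> \<gamma> r" using p(2) rK(1) unfolding fine_def by blast
      then show "k \<subseteq> \<gamma>1 x" using rK K unfolding \<gamma>_def by auto
    qed
    have "sum G (h ` p) = sum (G \<circ> h) p"
    proof (rule sum.reindex_nontrivial[OF finp])
      fix u v assume uv: "u \<in> p" "v \<in> p" "u \<noteq> v" "h u = h v"
      obtain r1 K1 where u: "u = (r1, K1)" by (cases u)
      obtain r2 K2 where v: "v = (r2, K2)" by (cases v)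
      obtain a1 b1 where K1: "K1 = {a1..b1}" "a1 \<le> r1" "r1 \<le> b1" using hK uv(1) u by blast
      obtain a2 b2 where K2: "K2 = {a2..b2}" "a2 \<le> r2" "r2 \<le> b2" using hK uv(2) v by blast
      have eq: "r1 = r2" "a1 = a2" using uv(4) K1 K2 unfolding u v h_def by auto
      have dis: "interior K1 \<inter> interior K2 = {}" using tagged_division_ofD(5)[OF p(1)] uv u v by blast
      have "r1 = a1"
      proof (rule ccontr)
        assume "r1 \<noteq> a1"
        then have "(r1 + a1) / 2 \<in> interior K1 \<inter> interior K2" using K1 K2 eq by auto
        then show False using dis by blast
      qed
      then show "G (h u) = 0" unfolding G_def h_def u using K1 by simp
    qed
    then have "(\<Sum>rK\<in>p. E2 rK) = sum G (h ` p)" using GE by simp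
    also have "\<dots> < \<epsilon>'" using hen[OF part fine] unfolding G_def by simp
    finally show ?thesis by simp
  qed
  have "F b0 - F a0 = (\<Sum>(r, K)\<in>p. F (Sup K) - F (Inf K))"
    using additive_tagged_division_1[OF ab p(1), of F] by simp
  also have "\<dots> \<le> (\<Sum>(r, K)\<in>p. (Sup K - Inf K) * C + B * (E1 (r, K) + E2 (r, K)))"
    using trm by (intro sum_mono) auto
  also have "\<dots> = (\<Sum>(r, K)\<in>p. Sup K - Inf K) * C + B * ((\<Sum>rK\<in>p. E1 rK) + (\<Sum>rK\<in>p. E2 rK))"
    by (simp add: split_def sum.distrib sum_distrib_left[symmetric] sum_distrib_right)
  also have "\<dots> \<le> (b0 - a0) * C + B * (2 * \<epsilon>')"
    using E1sum E2sum B ab unfolding sumlen by (intro add_mono mult_left_mono) auto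
  also have "\<dots> \<le> (b0 - a0) * C + \<epsilon>" using e'B by simp
  finally show "F b0 - F a0 \<le> (b0 - a0) * C + \<epsilon>" .
qed


lemma loc_fwd:
  fixes P :: "'a::real_normed_vector \<Rightarrow> real"
  assumes tri: "\<And>x y. P (x + y) \<le> P x + P y" and hom: "\<And>a x. a \<ge> 0 \<Longrightarrow> P (a *\<^sub>R x) \<le> a * P x"
    and up: "\<And>z. P z \<le> Bp * norm z"
    and fwd: "eventually (\<lambda>s. P (e + s *\<^sub>R d) \<le> P e + 1 * s) (at_right 0)"
  shows "\<exists>\<delta>>0. \<forall>h w E. 0 \<le> h \<longrightarrow> h < \<delta> \<longrightarrow> P w \<le> K \<longrightarrow>
           P (e + h *\<^sub>R (d + w) + E) \<le> P e + h * (K + 1) + Bp * norm E"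
proof -
  obtain b where b: "b > 0" "\<And>s. s > 0 \<Longrightarrow> s < b \<Longrightarrow> P (e + s *\<^sub>R d) \<le> P e + 1 * s"
    using fwd unfolding eventually_at_right_field by auto
  have "P (e + h *\<^sub>R (d + w) + E) \<le> P e + h * (K + 1) + Bp * norm E"
    if h: "0 \<le> h" "h < b" and w: "P w \<le> K" for h w E
  proof -
    have eq: "e + h *\<^sub>R (d + w) + E = (e + h *\<^sub>R d) + (h *\<^sub>R w + E)" by (simp add: algebra_simps)
    have 1: "P (e + h *\<^sub>R d) \<le> P e + h"
    proof (cases "h = 0")
      case True then show ?thesis by simp
    next
      case False then show ?thesis using b(2)[of h] h by simp
    qed
    have 2: "P (h *\<^sub>R w) \<le> h * K"
      using hom[OF h(1), of w] mult_left_mono[OF w h(1)] by linarith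
    have "P (e + h *\<^sub>R (d + w) + E) \<le> P (e + h *\<^sub>R d) + (P (h *\<^sub>R w) + P E)"
      unfolding eq using tri[of "e + h *\<^sub>R d" "h *\<^sub>R w + E"] tri[of "h *\<^sub>R w" E] by linarith
    then show ?thesis using 1 2 up[of E] by (simp add: algebra_simps)
  qed
  then show ?thesis using b(1) by blast
qed

lemma loc_bwd:
  fixes P :: "'a::real_normed_vector \<Rightarrow> real"
  assumes tri: "\<And>x y. P (x + y) \<le> P x + P y" and hom: "\<And>a x. a \<ge> 0 \<Longrightarrow> P (a *\<^sub>R x) \<le> a * P x"
    and up: "\<And>z. P z \<le> Bp * norm z"
    and fwd: "\<And>\<epsilon>. \<epsilon> > 0 \<Longrightarrow> eventually (\<lambda>s. P (e + s *\<^sub>R d) \<le> P e + \<epsilon> * s) (at_right 0)"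
    and h: "0 \<le> h" and w: "P w \<le> K"
  shows "P e \<le> P (e - h *\<^sub>R (d + w) - E) + h * K + Bp * norm E"
proof -
  have 1: "P e \<le> P (e - h *\<^sub>R d)" by (rule bwd[OF tri hom fwd h])
  have eq: "e - h *\<^sub>R d = (e - h *\<^sub>R (d + w) - E) + (h *\<^sub>R w + E)" by (simp add: algebra_simps)
  have 2: "P (h *\<^sub>R w) \<le> h * K"
    using hom[OF h, of w] mult_left_mono[OF w h] by linarith
  have "P (e - h *\<^sub>R d) \<le> P (e - h *\<^sub>R (d + w) - E) + (P (h *\<^sub>R w) + P E)"
    unfolding eq using tri[of "e - h *\<^sub>R (d + w) - E" "h *\<^sub>R w + E"] tri[of "h *\<^sub>R w" E] by linarith
  then show ?thesis using 1 2 up[of E] by (simp add: algebra_simps)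
qed

theorem lemma3:
  fixes T c L :: real
    and U :: "(real^'k) set"
    and V :: "(real^'n) set"
    and f :: "real \<Rightarrow> real^'n \<Rightarrow> real^'k \<Rightarrow> real^'n"
    and Dx :: "real \<Rightarrow> real^'n \<Rightarrow> real^'k \<Rightarrow> real^'n^'n"
    and x0 :: "real^'n"
    and N :: "real^'n \<Rightarrow> real"
    and NU :: "real^'k \<Rightarrow> real"
    and X0 L0 :: "(real^'n) set"
  assumes T_pos: "T > 0"
    and U0: "0 \<in> U"
    and f_cont: "continuous_on ({0..T} \<times> UNIV \<times> U) (\<lambda>(t, x, u). f t x u)"
    and Dx_deriv: "\<And>t x u. t \<in> {0..T} \<Longrightarrow> u \<in> U \<Longrightarrow>
        ((\<lambda>y. f t y u) has_derivative (\<lambda>h. Dx t x u *v h)) (at x)"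
    and Dx_cont: "continuous_on ({0..T} \<times> UNIV \<times> U) (\<lambda>(t, x, u). Dx t x u)"
    and Du_ex: "\<exists>Du :: real \<Rightarrow> real^'n \<Rightarrow> real^'k \<Rightarrow> real^'k^'n.
        (\<forall>t\<in>{0..T}. \<forall>x. \<forall>u\<in>U.
           ((\<lambda>w. f t x w) has_derivative (\<lambda>h. Du t x u *v h)) (at u within U))
        \<and> continuous_on ({0..T} \<times> UNIV \<times> U) (\<lambda>(t, x, u). Du t x u)"
    and N_norm: "is_norm N"
    and NU_norm: "is_norm NU"
    and A1_c: "c > 0"
    and A1_osl: "\<And>t x u. t \<in> {0..T} \<Longrightarrow> u \<in> U \<Longrightarrow> log_norm N (Dx t x u) \<le> - c"
    and A1_nom: "\<exists>xbar. carath_sol T (\<lambda>t x. f t x 0) xbar \<and> xbar 0 = x0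
                   \<and> bounded_wrt N (xbar ` {0..T})"
    and A2: "\<And>t x u1 u2. t \<in> {0..T} \<Longrightarrow> u1 \<in> U \<Longrightarrow> u2 \<in> U \<Longrightarrow>
        N (f t x u1 - f t x u2) \<le> L * NU (u1 - u2)"
    and U_bdd: "bounded_wrt NU U"
    and V_bdd: "bounded_wrt (dual_norm N) V"
    and X0_bdd: "bounded_wrt N X0"
    and L0_bdd: "bounded_wrt (dual_norm N) L0"
  shows "\<exists>X \<Lambda>. bounded_wrt N X \<and> bounded_wrt (dual_norm N) \<Lambda> \<and>
     (\<forall>u v x lam.
        u measurable_on {0..T} \<and> (\<forall>t\<in>{0..T}. u t \<in> U) \<and>
        v measurable_on {0..T} \<and> (\<forall>t\<in>{0..T}. v t \<in> V) \<and>
        carath_sol T (\<lambda>t y. f t y (u t)) x \<and>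
        carath_sol T (\<lambda>t l. - (transpose (Dx t (x t) (u t)) *v l) - v t) lam \<and>
        x 0 \<in> X0 \<and> lam T \<in> L0
        \<longrightarrow> (\<forall>t\<in>{0..T}. x t \<in> X \<and> lam t \<in> \<Lambda>))"
  proof -
  obtain xbar where xb: "carath_sol T (\<lambda>t x. f t x 0) xbar" "xbar 0 = x0" "bounded_wrt N (xbar ` {0..T})"
    using A1_nom by blast
  obtain Bb where Bb: "\<And>t. t \<in> {0..T} \<Longrightarrow> N (xbar t) \<le> Bb" using xb(3) unfolding bounded_wrt_def by blast
  obtain BU where BU: "\<And>z. z \<in> U \<Longrightarrow> NU z \<le> BU" using U_bdd unfolding bounded_wrt_def by blast
  obtain BV where BV: "\<And>z. z \<in> V \<Longrightarrow> dual_norm N z \<le> BV" using V_bdd unfolding bounded_wrt_def by blast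
  obtain B0 where B0: "\<And>z. z \<in> X0 \<Longrightarrow> N z \<le> B0" using X0_bdd unfolding bounded_wrt_def by blast
  obtain BL where BL: "\<And>z. z \<in> L0 \<Longrightarrow> dual_norm N z \<le> BL" using L0_bdd unfolding bounded_wrt_def by blast
  obtain Bn where Bn: "Bn > 0" "\<And>z. N z \<le> Bn * norm z" using nrm_upper[OF N_norm] by blast
  obtain Bd where Bd: "Bd > 0" "\<And>z. dual_norm N z \<le> Bd * norm z" using dn_upper[OF N_norm] by blast
  define K where "K = \<bar>L\<bar> * \<bar>BU\<bar>"
  define KV where "KV = \<bar>BV\<bar>"
  have K0: "K \<ge> 0" "KV \<ge> 0" unfolding K_def KV_def by auto
  have Nw: "N (f r z u - f r z 0) \<le> K" if "r \<in> {0..T}" "u \<in> U" for r z u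
  proof -
    have "N (f r z u - f r z 0) \<le> L * NU (u - 0)" using A2[OF that(1) that(2) U0] .
    also have "\<dots> \<le> \<bar>L\<bar> * NU u" using nrm_nonneg[OF NU_norm, of u]
      by (simp add: mult_right_mono)
    also have "\<dots> \<le> \<bar>L\<bar> * \<bar>BU\<bar>" using BU[OF that(2)] by (intro mult_left_mono) auto
    finally show ?thesis unfolding K_def .
  qed
  have Ntri: "\<And>x y. N (x + y) \<le> N x + N y" by (rule nrm_tri[OF N_norm])
  have Nhom: "\<And>a x. a \<ge> 0 \<Longrightarrow> N (a *\<^sub>R x) \<le> a * N x" by (simp add: nrm_scale[OF N_norm])
  have Dtri: "\<And>x y. dual_norm N (x + y) \<le> dual_norm N x + dual_norm N y" by (rule dn_tri[OF N_norm])
  have Dhom: "\<And>a x. a \<ge> 0 \<Longrightarrow> dual_norm N (a *\<^sub>R x) \<le> a * dual_norm N x" by (rule dn_hom[OF N_norm])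
  have lnle: "log_norm N (Dx t z u) \<le> 0" if "t \<in> {0..T}" "u \<in> U" for t z u
    using A1_osl[OF that, of z] A1_c by simp
  have contDx: "continuous_on UNIV (\<lambda>z. Dx t z u)" if "t \<in> {0..T}" "u \<in> U" for t u
  proof -
    have "continuous_on UNIV (\<lambda>z. (\<lambda>(t, x, u). Dx t x u) (t, z, u))"
      by (rule continuous_on_compose2[OF Dx_cont]) (use that in \<open>auto intro!: continuous_intros\<close>)
    then show ?thesis by simp
  qed
  show ?thesis
  proof (rule exI[of _ "{z. N z \<le> B0 + N x0 + (K + 1) * T + Bb}"],
         rule exI[of _ "{z. dual_norm N z \<le> BL + (KV + 1) * T}"], intro conjI allI impI ballI)
    show "bounded_wrt N {z. N z \<le> B0 + N x0 + (K + 1) * T + Bb}" unfolding bounded_wrt_def by blast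
    show "bounded_wrt (dual_norm N) {z. dual_norm N z \<le> BL + (KV + 1) * T}" unfolding bounded_wrt_def by blast
  next
    fix u v x lam t
    assume H: "u measurable_on {0..T} \<and> (\<forall>t\<in>{0..T}. u t \<in> U) \<and>
        v measurable_on {0..T} \<and> (\<forall>t\<in>{0..T}. v t \<in> V) \<and>
        carath_sol T (\<lambda>t y. f t y (u t)) x \<and>
        carath_sol T (\<lambda>t l. - (transpose (Dx t (x t) (u t)) *v l) - v t) lam \<and>
        x 0 \<in> X0 \<and> lam T \<in> L0"
      and t: "t \<in> {0..T}"
    have uU: "\<And>s. s \<in> {0..T} \<Longrightarrow> u s \<in> U" and vV: "\<And>s. s \<in> {0..T} \<Longrightarrow> v s \<in> V"
      and xs: "carath_sol T (\<lambda>t y. f t y (u t)) x"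
      and ls: "carath_sol T (\<lambda>t l. - (transpose (Dx t (x t) (u t)) *v l) - v t) lam"
      and x0X: "x 0 \<in> X0" and lT: "lam T \<in> L0" using H by auto
    define e where "e s = x s - xbar s" for s
    define g where "g = (\<lambda>s. f s (x s) (u s) - f s (xbar s) 0)"
    have hi: "(g has_integral (e s - e 0)) {0..s}" if s: "s \<in> {0..t}" for s
    proof -
      have sT: "s \<in> {0..T}" using s t by auto
      have a: "((\<lambda>s. f s (x s) (u s)) has_integral (x s - x 0)) {0..s}" using xs sT unfolding carath_sol_def by blast
      have b: "((\<lambda>s. f s (xbar s) 0) has_integral (xbar s - xbar 0)) {0..s}" using xb(1) sT unfolding carath_sol_def by blast
      have "(g has_integral ((x s - x 0) - (xbar s - xbar 0))) {0..s}" unfolding g_def by (rule has_integral_diff[OF a b])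
      moreover have "(x s - x 0) - (xbar s - xbar 0) = e s - e 0" unfolding e_def by (simp add: algebra_simps)
      ultimately show ?thesis by simp
    qed
    have intg: "g integrable_on {0..t}" using hi[of t] t by (auto intro: has_integral_integrable)
    have mainx: "(N \<circ> e) t - (N \<circ> e) 0 \<le> (t - 0) * (K + 1)"
    proof (rule comp0[where B=Bn])
      show "0 \<le> t" using t by simp
      show "g integrable_on {0..t}" by (rule intg)
      show "0 \<le> Bn" using Bn by simp
    next
      fix r assume r: "r \<in> {0..t}"
      have rT: "r \<in> {0..T}" using r t by auto
      define D where "D = f r (x r) (u r) - f r (xbar r) (u r)"
      define w where "w = f r (xbar r) (u r) - f r (xbar r) 0"
      have gr: "g r = D + w" unfolding g_def D_def w_def by simp
      have Nw': "N w \<le> K" unfolding w_def by (rule Nw[OF rT uU[OF rT]])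
      have fwdall: "eventually (\<lambda>s. N (e r + s *\<^sub>R D) \<le> N (e r) + \<epsilon> * s) (at_right 0)" if "\<epsilon> > 0" for \<epsilon>
        using PN[OF N_norm Dx_deriv[OF rT uU[OF rT]] contDx[OF rT uU[OF rT]] lnle[OF rT uU[OF rT]] that,
                 of "x r" "xbar r"]
        unfolding e_def D_def by simp
      obtain \<delta> where dl: "\<delta> > 0" "\<And>h w E. 0 \<le> h \<Longrightarrow> h < \<delta> \<Longrightarrow> N w \<le> K \<Longrightarrow>
           N (e r + h *\<^sub>R (D + w) + E) \<le> N (e r) + h * (K + 1) + Bn * norm E"
        using loc_fwd[where K=K, OF Ntri Nhom Bn(2) fwdall[of 1]] by auto
      have bw: "\<And>h E. 0 \<le> h \<Longrightarrow> N (e r) \<le> N (e r - h *\<^sub>R (D + w) - E) + h * K + Bn * norm E"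
        using loc_bwd[OF Ntri Nhom Bn(2) fwdall _ Nw'] by blast
      show "\<exists>\<delta>>0. \<forall>a b. 0 \<le> a \<longrightarrow> a \<le> r \<longrightarrow> r \<le> b \<longrightarrow> b \<le> t \<longrightarrow> b - a < \<delta> \<longrightarrow>
          (N \<circ> e) b - (N \<circ> e) r \<le> (b - r) * (K + 1) + Bn * norm (integral {r..b} g - (b - r) *\<^sub>R g r) \<and>
          (N \<circ> e) r - (N \<circ> e) a \<le> (r - a) * (K + 1) + Bn * norm (integral {a..r} g - (r - a) *\<^sub>R g r)"
      proof (intro exI[of _ \<delta>] conjI allI impI dl(1))
        fix a b assume ab: "0 \<le> a" "a \<le> r" "r \<le> b" "b \<le> t" "b - a < \<delta>"
        have i1: "integral {r..b} g = e b - e r" by (rule int_sub[OF hi]) (use ab in auto)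
        have i2: "integral {a..r} g = e r - e a" by (rule int_sub[OF hi]) (use ab in auto)
        define E1 where "E1 = integral {r..b} g - (b - r) *\<^sub>R g r"
        define E2 where "E2 = integral {a..r} g - (r - a) *\<^sub>R g r"
        have eb: "e b = e r + (b - r) *\<^sub>R (D + w) + E1" unfolding E1_def i1 gr by simp
        have ea: "e a = e r - (r - a) *\<^sub>R (D + w) - E2" unfolding E2_def i2 gr by simp
        have "N (e b) \<le> N (e r) + (b - r) * (K + 1) + Bn * norm E1"
          unfolding eb using dl(2)[of "b - r" w E1] ab Nw' by simp
        then show "(N \<circ> e) b - (N \<circ> e) r \<le> (b - r) * (K + 1) + Bn * norm (integral {r..b} g - (b - r) *\<^sub>R g r)"
          unfolding E1_def by simp
        have "N (e r) \<le> N (e a) + (r - a) * K + Bn * norm E2"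
          unfolding ea using bw[of "r - a" E2] ab by simp
        moreover have "(r - a) * K \<le> (r - a) * (K + 1)" using ab by (intro mult_left_mono) auto
        ultimately show "(N \<circ> e) r - (N \<circ> e) a \<le> (r - a) * (K + 1) + Bn * norm (integral {a..r} g - (r - a) *\<^sub>R g r)"
          unfolding E2_def by simp
      qed
    qed
    have "N (x t) \<le> B0 + N x0 + (K + 1) * T + Bb"
    proof -
      have "x t = e t + xbar t" unfolding e_def by simp
      then have "N (x t) \<le> N (e t) + N (xbar t)" using Ntri by metis
      moreover have "N (e 0) \<le> B0 + N x0" unfolding e_def using xb(2) nrm_diff[OF N_norm, of "x 0" x0] B0[OF x0X] by simp
      moreover have "t * (K + 1) \<le> T * (K + 1)" using t K0 by (intro mult_right_mono) auto
      ultimately show ?thesis using mainx Bb[OF t] by (simp add: algebra_simps)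
    qed
    then show "x t \<in> {z. N z \<le> B0 + N x0 + (K + 1) * T + Bb}" by simp
    define G where "G = (\<lambda>s. - (transpose (Dx s (x s) (u s)) *v lam s) - v s)"
    have hi0: "(G has_integral (lam s - lam 0)) {0..s}" if "s \<in> {0..T}" for s
      using ls that unfolding carath_sol_def G_def by blast
    have intG: "G integrable_on {t..T}"
      by (rule integrable_subinterval_real[of G 0 T]) (use hi0[of T] T_pos t in \<open>auto intro: has_integral_integrable\<close>)
    have mainl: "(\<lambda>s. - dual_norm N (lam s)) T - (\<lambda>s. - dual_norm N (lam s)) t \<le> (T - t) * (KV + 1)"
    proof (rule comp0[where B=Bd])
      show "t \<le> T" using t by simp
      show "G integrable_on {t..T}" by (rule intG)
      show "0 \<le> Bd" using Bd by simp
    next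
      fix r assume r: "r \<in> {t..T}"
      have rT: "r \<in> {0..T}" using r t by auto
      define A where "A = Dx r (x r) (u r)"
      define d where "d = transpose A *v lam r"
      define w where "w = v r"
      have Gr: "G r = - (d + w)" unfolding G_def d_def w_def A_def by simp
      have Dw: "dual_norm N w \<le> KV" unfolding w_def KV_def using BV[OF vV[OF rT]] by simp
      have fwdall: "eventually (\<lambda>s. dual_norm N (lam r + s *\<^sub>R d) \<le> dual_norm N (lam r) + \<epsilon> * s) (at_right 0)"
        if "\<epsilon> > 0" for \<epsilon>
        unfolding d_def A_def by (rule dn_fwd[OF N_norm lnle[OF rT uU[OF rT]] that])
      obtain \<delta> where dl: "\<delta> > 0" "\<And>h w E. 0 \<le> h \<Longrightarrow> h < \<delta> \<Longrightarrow> dual_norm N w \<le> KV \<Longrightarrow>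
           dual_norm N (lam r + h *\<^sub>R (d + w) + E) \<le> dual_norm N (lam r) + h * (KV + 1) + Bd * norm E"
        using loc_fwd[where K=KV, OF Dtri Dhom Bd(2) fwdall[of 1]] by auto
      have bw: "\<And>h E. 0 \<le> h \<Longrightarrow> dual_norm N (lam r) \<le> dual_norm N (lam r - h *\<^sub>R (d + w) - E) + h * KV + Bd * norm E"
        using loc_bwd[OF Dtri Dhom Bd(2) fwdall _ Dw] by blast
      let ?F = "\<lambda>s. - dual_norm N (lam s)"
      show "\<exists>\<delta>>0. \<forall>a b. t \<le> a \<longrightarrow> a \<le> r \<longrightarrow> r \<le> b \<longrightarrow> b \<le> T \<longrightarrow> b - a < \<delta> \<longrightarrow>
          ?F b - ?F r \<le> (b - r) * (KV + 1) + Bd * norm (integral {r..b} G - (b - r) *\<^sub>R G r) \<and>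
          ?F r - ?F a \<le> (r - a) * (KV + 1) + Bd * norm (integral {a..r} G - (r - a) *\<^sub>R G r)"
      proof (intro exI[of _ \<delta>] conjI allI impI dl(1))
        fix a b assume ab: "t \<le> a" "a \<le> r" "r \<le> b" "b \<le> T" "b - a < \<delta>"
        have i1: "integral {r..b} G = lam b - lam r" by (rule int_sub[OF hi0]) (use ab t in auto)
        have i2: "integral {a..r} G = lam r - lam a" by (rule int_sub[OF hi0]) (use ab t in auto)
        define E1 where "E1 = integral {r..b} G - (b - r) *\<^sub>R G r"
        define E2 where "E2 = integral {a..r} G - (r - a) *\<^sub>R G r"
        have lb: "lam b = lam r - (b - r) *\<^sub>R (d + w) - (- E1)" unfolding E1_def i1 Gr by (simp add: algebra_simps)
        have la: "lam a = lam r + (r - a) *\<^sub>R (d + w) + (- E2)" unfolding E2_def i2 Gr by (simp add: algebra_simps)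
        have "dual_norm N (lam r) \<le> dual_norm N (lam b) + (b - r) * KV + Bd * norm (- E1)"
          unfolding lb using bw[of "b - r" "- E1"] ab by simp
        moreover have "(b - r) * KV \<le> (b - r) * (KV + 1)" using ab by (intro mult_left_mono) auto
        ultimately show "?F b - ?F r \<le> (b - r) * (KV + 1) + Bd * norm (integral {r..b} G - (b - r) *\<^sub>R G r)"
          unfolding E1_def by (simp add: norm_minus_commute)
        have "dual_norm N (lam a) \<le> dual_norm N (lam r) + (r - a) * (KV + 1) + Bd * norm (- E2)"
          unfolding la using dl(2)[of "r - a" w "- E2"] ab Dw by simp
        then show "?F r - ?F a \<le> (r - a) * (KV + 1) + Bd * norm (integral {a..r} G - (r - a) *\<^sub>R G r)"
          unfolding E2_def by (simp add: norm_minus_commute)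
      qed
    qed
    have "dual_norm N (lam t) \<le> BL + (KV + 1) * T"
    proof -
      have "(T - t) * (KV + 1) \<le> T * (KV + 1)" using t K0 by (intro mult_right_mono) auto
      then show ?thesis using mainl BL[OF lT] by (simp add: algebra_simps)
    qed
    then show "lam t \<in> {z. dual_norm N z \<le> BL + (KV + 1) * T}" by simp
  qed
qed

end
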